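(* Let $\mathcal F=(f_1,\dots,f_m)\colon\mathbb R^n\to\mathbb R^m$ be continuously differentiable with each $f_i$ convex, let $Q\subset\mathbb R^m$ be nonempty, closed and convex, $Q^+:=Q-\mathbb R^m_+$, and let $x^k\in\mathbb R^n$. Set $p^k:=P_{Q^+}(\mathcal F(x^k))$, $\rho^k:=\mathcal F(x^k)-p^k$, $Q^+_k:=\{y\in\mathbb R^m:\langle\rho^k,y-p^k\rangle\le0\}$ and $\delta_k(x):=\tfrac12\mathrm{dist}^2(\mathcal F(x),Q^+_k)$ (so $\delta_k\equiv0$ if $\rho^k=0$, and $\delta_k(x)=[\langle\rho^k,\mathcal F(x)-p^k\rangle]_+^2/(2\|\rho^k\|^2)$ if $\rho^k\ne0$). Then $\delta_k$ is convex on $\mathbb R^n$.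
   Context: $Q-\mathbb R^m_+:=\{y-u:y\in Q,u\in\mathbb R^m_+\}$; $P_{Q^+}$ is the Euclidean metric projection onto $Q^+$; $[t]_+:=\max(t,0)$.
   Formalization: A nearest point of $Q^+$ to $\mathcal F(x^k)$ is assumed to exist, so that $p^k=P_{Q^+}(\mathcal F(x^k))$ is defined. The statement above fails without it. *)

theory Defs
  imports "HOL-Analysis.Analysis"
begin

definition nonneg_orthant :: "(real^'m) set" where
  "nonneg_orthant = {u. \<forall>i. 0 \<le> u $ i}"

definition Qplus :: "(real^'m) set \<Rightarrow> (real^'m) set" where
  "Qplus Q = {y - u | y u. y \<in> Q \<and> u \<in> nonneg_orthant}"

end

theory Submission
  imports Defs
begin

lemma sq_max_convex:
  fixes a b u v :: real
  assumes "u \<ge> 0" "v \<ge> 0" "u + v = 1"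
  shows "(max 0 (u * a + v * b))\<^sup>2 \<le> u * (max 0 a)\<^sup>2 + v * (max 0 b)\<^sup>2"
proof -
  define A where "A = max 0 a"
  define B where "B = max 0 b"
  have A0: "A \<ge> 0" "a \<le> A" and B0: "B \<ge> 0" "b \<le> B" by (auto simp: A_def B_def)
  have "u * a \<le> u * A" "v * b \<le> v * B" using A0 B0 assms by (auto intro: mult_left_mono)
  hence m: "max 0 (u * a + v * b) \<le> u * A + v * B" using A0 B0 assms by auto
  have "(max 0 (u * a + v * b))\<^sup>2 \<le> (u * A + v * B)\<^sup>2"
    using m by (intro power_mono) auto
  also have "\<dots> = u * A\<^sup>2 + v * B\<^sup>2 - u * v * (A - B)\<^sup>2"
    proof -
    have v: "v = 1 - u" using assms(3) by simp
    show ?thesis unfolding v by (simp add: power2_eq_square algebra_simps)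
  qed
  also have "\<dots> \<le> u * A\<^sup>2 + v * B\<^sup>2" using assms by simp
  finally show ?thesis by (simp add: A_def B_def)
qed

theorem lemma5:
  fixes F :: "real^'n \<Rightarrow> real^'m"
    and F' :: "real^'n \<Rightarrow> ((real^'n) \<Rightarrow>\<^sub>L (real^'m))"
    and Q :: "(real^'m) set"
    and xk :: "real^'n"
    and pk \<rho>k :: "real^'m"
    and Qk :: "(real^'m) set"
    and \<delta>k :: "real^'n \<Rightarrow> real"
  assumes F_deriv: "\<And>x. (F has_derivative blinfun_apply (F' x)) (at x)"
    and F'_cont: "continuous_on UNIV F'"
    and F_conv: "\<And>i. convex_on UNIV (\<lambda>x. F x $ i)"
    and Q_ne: "Q \<noteq> {}" and Q_closed: "closed Q" and Q_convex: "convex Q"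
    and proj_exists: "\<exists>p\<in>Qplus Q. \<forall>z\<in>Qplus Q. dist (F xk) p \<le> dist (F xk) z"
    and pk_def: "pk = closest_point (Qplus Q) (F xk)"
    and \<rho>k_def: "\<rho>k = F xk - pk"
    and Qk_def: "Qk = {y. inner \<rho>k (y - pk) \<le> 0}"
    and \<delta>k_def: "\<delta>k = (\<lambda>x. (1/2) * (infdist (F x) Qk)\<^sup>2)"
  shows "convex_on UNIV \<delta>k"
proof -
  have pQ: "pk \<in> Qplus Q \<and> (\<forall>z\<in>Qplus Q. dist (F xk) pk \<le> dist (F xk) z)"
    unfolding pk_def closest_point_def using someI_ex[of "\<lambda>x. x \<in> Qplus Q \<and> (\<forall>y\<in>Qplus Q. dist (F xk) x \<le> dist (F xk) y)"] proj_exists by blast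
  have rho_nn: "\<rho>k $ i \<ge> 0" for i
  proof (rule ccontr)
    assume neg: "\<not> \<rho>k $ i \<ge> 0"
    define t where "t = - \<rho>k $ i"
    have t0: "t > 0" using neg by (simp add: t_def)
    from pQ obtain y u where yu: "pk = y - u" "y \<in> Q" "u \<in> nonneg_orthant"
      unfolding Qplus_def by blast
    have "u + t *\<^sub>R axis i 1 \<in> nonneg_orthant"
      using yu(3) t0 by (auto simp: nonneg_orthant_def axis_def)
    hence mem: "pk - t *\<^sub>R axis i 1 \<in> Qplus Q"
      unfolding Qplus_def using yu by (auto intro!: exI[of _ y] exI[of _ "u + t *\<^sub>R axis i 1"] simp: algebra_simps)
    have "dist (F xk) pk \<le> dist (F xk) (pk - t *\<^sub>R axis i 1)" using pQ mem by blast
    hence "norm \<rho>k \<le> norm (\<rho>k + t *\<^sub>R axis i 1)"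
      by (simp add: dist_norm \<rho>k_def algebra_simps)
    hence "(norm \<rho>k)\<^sup>2 \<le> (norm (\<rho>k + t *\<^sub>R axis i 1))\<^sup>2"
      by (intro power_mono) auto
    also have "\<dots> = (norm \<rho>k)\<^sup>2 + 2 * t * \<rho>k $ i + t\<^sup>2"
      unfolding power2_norm_eq_inner by (simp add: inner_add_left inner_add_right inner_axis inner_axis' inner_axis_axis inner_commute inner_real_def algebra_simps power2_eq_square)
    finally have "0 \<le> 2 * t * \<rho>k $ i + t\<^sup>2" by simp
    hence "\<rho>k $ i * \<rho>k $ i \<le> 0" using t0 by (simp add: t_def power2_eq_square)
    moreover have "\<rho>k $ i * \<rho>k $ i > 0" using neg by (simp add: mult_neg_neg)
    ultimately show False by simp
  qed
  define g where "g x = inner \<rho>k (F x - pk)" for x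
  have g_conv: "g (u *\<^sub>R x + v *\<^sub>R y) \<le> u * g x + v * g y"
    if uv: "u \<ge> 0" "v \<ge> 0" "u + v = 1" for u v x y
  proof -
    have "g (u *\<^sub>R x + v *\<^sub>R y) = (\<Sum>i\<in>UNIV. \<rho>k $ i * F (u *\<^sub>R x + v *\<^sub>R y) $ i) - inner \<rho>k pk"
      by (simp add: g_def inner_diff_right inner_vec_def right_diff_distrib sum_subtractf)
    also have "\<dots> \<le> (\<Sum>i\<in>UNIV. \<rho>k $ i * (u * F x $ i + v * F y $ i)) - inner \<rho>k pk"
    proof (intro diff_right_mono sum_mono mult_left_mono)
      fix i show "F (u *\<^sub>R x + v *\<^sub>R y) $ i \<le> u * F x $ i + v * F y $ i"
        using F_conv[of i] uv unfolding convex_on_def by blast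
      show "0 \<le> \<rho>k $ i" by (rule rho_nn)
    qed
    also have "\<dots> = u * g x + v * g y"
    proof -
      have gS: "g z = (\<Sum>i\<in>UNIV. \<rho>k $ i * F z $ i) - inner \<rho>k pk" for z
        by (simp add: g_def inner_diff_right inner_vec_def right_diff_distrib sum_subtractf)
      have e: "(\<Sum>i\<in>UNIV. \<rho>k $ i * (u * F x $ i + v * F y $ i)) =
          u * (\<Sum>i\<in>UNIV. \<rho>k $ i * F x $ i) + v * (\<Sum>i\<in>UNIV. \<rho>k $ i * F y $ i)"
        by (simp add: sum.distrib sum_distrib_left algebra_simps)
      have "inner \<rho>k pk = u * inner \<rho>k pk + v * inner \<rho>k pk"
        using uv(3) by (metis distrib_right mult_1)
      then show ?thesis unfolding gS e by (simp add: algebra_simps)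
    qed
    finally show ?thesis .
  qed
  show ?thesis
  proof (cases "\<rho>k = 0")
    case True
    hence "Qk = UNIV" by (simp add: Qk_def)
    hence "\<delta>k = (\<lambda>x. 0)" by (simp add: \<delta>k_def fun_eq_iff)
    thus ?thesis by (simp add: convex_on_const)
  next
    case False
    define c where "c = norm \<rho>k"
    have c0: "c > 0" using False by (simp add: c_def)
    have idist: "infdist z Qk = max 0 (inner \<rho>k (z - pk)) / c" for z
    proof -
      define s where "s = inner \<rho>k (z - pk)"
      have "pk \<in> Qk" using Qk_def by simp
      hence ne: "Qk \<noteq> {}" by blast
      show ?thesis
      proof (cases "s \<le> 0")
        case True
        hence "z \<in> Qk" by (simp add: Qk_def s_def)
        thus ?thesis using True by (simp add: s_def)
      next
        case False
        define w where "w = z - (s / c\<^sup>2) *\<^sub>R \<rho>k"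
        have cc: "inner \<rho>k \<rho>k = c\<^sup>2" by (simp add: c_def power2_norm_eq_inner)
        have "inner \<rho>k (w - pk) = s - (s / c\<^sup>2) * c\<^sup>2"
          by (simp add: w_def s_def inner_diff_right cc algebra_simps)
        hence "w \<in> Qk" using c0 by (simp add: Qk_def)
        hence "infdist z Qk \<le> dist z w" by (rule infdist_le)
        also have "dist z w = s / c"
          using c0 False by (simp add: w_def dist_norm c_def power2_eq_square)
        finally have up: "infdist z Qk \<le> s / c" .
        have lo: "s / c \<le> infdist z Qk"
          unfolding infdist_def using ne
        proof (simp, intro cINF_greatest)
          show "Qk \<noteq> {}" by fact
          fix y assume "y \<in> Qk"
          hence "inner \<rho>k (y - pk) \<le> 0" by (simp add: Qk_def)
          hence "s \<le> inner \<rho>k (z - y)"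
            by (simp add: s_def inner_diff_right)
          also have "\<dots> \<le> c * dist z y"
            using Cauchy_Schwarz_ineq2[of \<rho>k "z - y"] by (simp add: c_def dist_norm)
          finally show "s / c \<le> dist z y" using c0 by (simp add: divide_le_eq mult.commute)
        qed
        show ?thesis using up lo False by (simp add: s_def)
      qed
    qed
    have dform: "\<delta>k x = (max 0 (g x))\<^sup>2 / (2 * c\<^sup>2)" for x
      by (simp add: \<delta>k_def idist g_def power_divide)
    show ?thesis
      unfolding convex_on_def
    proof (intro conjI ballI allI impI)
      fix x y :: "real^'n" and u v :: real
      assume uv: "0 \<le> u" "0 \<le> v" "u + v = 1"
      have "max 0 (g (u *\<^sub>R x + v *\<^sub>R y)) \<le> max 0 (u * g x + v * g y)"
        using g_conv[OF uv, of x y] by (intro max.mono) auto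
      hence "(max 0 (g (u *\<^sub>R x + v *\<^sub>R y)))\<^sup>2 \<le> (max 0 (u * g x + v * g y))\<^sup>2"
        by (intro power_mono) auto
      also have "\<dots> \<le> u * (max 0 (g x))\<^sup>2 + v * (max 0 (g y))\<^sup>2"
        by (rule sq_max_convex[OF uv])
      finally have "(max 0 (g (u *\<^sub>R x + v *\<^sub>R y)))\<^sup>2 / (2 * c\<^sup>2)
          \<le> (u * (max 0 (g x))\<^sup>2 + v * (max 0 (g y))\<^sup>2) / (2 * c\<^sup>2)"
        using c0 by (intro divide_right_mono) auto
      thus "\<delta>k (u *\<^sub>R x + v *\<^sub>R y) \<le> u * \<delta>k x + v * \<delta>k y"
        by (simp add: dform add_divide_distrib)
    qed simp
  qed
qed

end
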